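(* For every integer $n\ge 0$ there is a surjective $\mathbb{R}$-algebra homomorphism $A_{\mathbb R}\to M_{n+1}(\mathbb{C})$.
   Context: $A_{\mathbb R}=\mathbb{R}\langle x_1,\dots,x_7\rangle/(r_1,\dots,r_7)$ with $r_1=[x_2,x_3]+[x_4,x_5]+[x_6,x_7]$, $r_2=[x_3,x_1]+[x_4,x_6]+[x_7,x_5]$, $r_3=[x_1,x_2]+[x_6,x_5]+[x_7,x_4]$, $r_4=[x_5,x_1]+[x_3,x_7]+[x_6,x_2]$, $r_5=[x_1,x_4]+[x_2,x_7]+[x_3,x_6]$, $r_6=[x_7,x_1]+[x_5,x_3]+[x_2,x_4]$, $r_7=[x_1,x_6]+[x_4,x_3]+[x_5,x_2]$. $M_{n+1}(\mathbb{C})$ is regarded as an $\mathbb{R}$-algebra. *)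

theory Defs
  imports "HOL-Analysis.Analysis"
begin

text \<open>Square complex matrices are modelled as complex^'n^'n (size CARD('n) = n+1,
  arbitrary n >= 0), with matrix product (**), identity mat 1 and real scalar
  multiplication scaleR; this is M_{n+1}(C) regarded as an R-algebra.\<close>

definition comm :: "complex^'n^'n \<Rightarrow> complex^'n^'n \<Rightarrow> complex^'n^'n" where
  "comm a b = a ** b - b ** a"

text \<open>The seven defining relations r_1..r_7 of A_R, evaluated at x_i := X i.\<close>
definition AR_relations :: "(nat \<Rightarrow> complex^'n^'n) \<Rightarrow> bool" where
  "AR_relations X \<longleftrightarrow>
     comm (X 2) (X 3) + comm (X 4) (X 5) + comm (X 6) (X 7) = 0 \<and>
     comm (X 3) (X 1) + comm (X 4) (X 6) + comm (X 7) (X 5) = 0 \<and>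
     comm (X 1) (X 2) + comm (X 6) (X 5) + comm (X 7) (X 4) = 0 \<and>
     comm (X 5) (X 1) + comm (X 3) (X 7) + comm (X 6) (X 2) = 0 \<and>
     comm (X 1) (X 4) + comm (X 2) (X 7) + comm (X 3) (X 6) = 0 \<and>
     comm (X 7) (X 1) + comm (X 5) (X 3) + comm (X 2) (X 4) = 0 \<and>
     comm (X 1) (X 6) + comm (X 4) (X 3) + comm (X 5) (X 2) = 0"

text \<open>Unital R-subalgebra of M_{n+1}(C) generated by a set S (the image of the
  R-algebra homomorphism A_R -> M_{n+1}(C) determined by the images of the generators).\<close>
inductive_set real_subalg_gen :: "(complex^'n^'n) set \<Rightarrow> (complex^'n^'n) set"
  for S where
  gen: "x \<in> S \<Longrightarrow> x \<in> real_subalg_gen S"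
| one: "mat 1 \<in> real_subalg_gen S"
| add: "x \<in> real_subalg_gen S \<Longrightarrow> y \<in> real_subalg_gen S \<Longrightarrow> x + y \<in> real_subalg_gen S"
| mult: "x \<in> real_subalg_gen S \<Longrightarrow> y \<in> real_subalg_gen S \<Longrightarrow> x ** y \<in> real_subalg_gen S"
| scale: "x \<in> real_subalg_gen S \<Longrightarrow> (r::real) *\<^sub>R x \<in> real_subalg_gen S"

end

theory Submission imports Defs begin

definition sm :: "complex \<Rightarrow> complex^'n^'n \<Rightarrow> complex^'n^'n" where
  "sm c M = (\<chi> i j. c * M$i$j)"

lemma comm_sm_l: "comm (sm c A) B = sm c (comm A B)"
  by (simp add: comm_def sm_def matrix_matrix_mult_def vec_eq_iff sum_distrib_left
      right_diff_distrib mult_ac)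
lemma comm_sm_r: "comm A (sm c B) = sm c (comm A B)"
  by (simp add: comm_def sm_def matrix_matrix_mult_def vec_eq_iff sum_distrib_left
      right_diff_distrib mult_ac)
lemma mat_mul_l: "mat c ** B = sm c B"
  by (simp add: sm_def mat_def matrix_matrix_mult_def vec_eq_iff
      if_distrib [of "\<lambda>x. x * y" for y] sum.delta cong: if_cong)
lemma mat_mul_r: "B ** mat c = sm c B"
  by (simp add: sm_def mat_def matrix_matrix_mult_def vec_eq_iff
      if_distrib [of "\<lambda>x. y * x" for y] sum.delta mult.commute cong: if_cong)
lemma comm_mat_l: "comm (mat c) B = 0"
  by (simp add: comm_def mat_mul_l mat_mul_r)
lemma comm_mat_r: "comm B (mat c) = 0"
  by (simp add: comm_def mat_mul_l mat_mul_r)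
lemma comm_0_l: "comm 0 B = 0" by (simp add: comm_def)
lemma comm_0_r: "comm B 0 = 0" by (simp add: comm_def)
lemma comm_self: "comm A A = 0" by (simp add: comm_def)
lemma comm_swap: "comm B A = - comm A B" by (simp add: comm_def)
lemma sm_add: "sm c M + sm d M = sm (c+d) M"
  by (simp add: sm_def vec_eq_iff distrib_right)
lemma sm_sm: "sm c (sm d M) = sm (c*d) M"
  by (simp add: sm_def vec_eq_iff)
lemma sm_one: "sm 1 M = M" by (simp add: sm_def vec_eq_iff)
lemma sm_zero: "sm 0 M = 0" by (simp add: sm_def vec_eq_iff)
lemma sm_c0: "sm c 0 = 0" by (simp add: sm_def vec_eq_iff)
lemma sm_neg: "sm c (-M) = - sm c M" by (simp add: sm_def vec_eq_iff)

lemma rels: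
  fixes A B :: "complex^'n^'n"
  defines "X \<equiv> (\<lambda>k::nat. if k = 1 then A else if k = 2 then B else if k = 3 then mat \<i>
     else if k = 5 then sm \<i> A else if k = 6 then sm (-\<i>) B else 0)"
  shows "AR_relations X"
proof -
  have a: "sm (-\<i>) (comm A B) + sm \<i> (comm A B) = 0"
    by (simp add: sm_add sm_zero)
  have b: "comm A B + sm 1 (comm B A) = 0" by (simp add: sm_one comm_def)
  show ?thesis unfolding AR_relations_def X_def
    using a b
    by (simp add: comm_sm_l comm_sm_r comm_mat_l comm_mat_r comm_0_l comm_0_r comm_self sm_sm
        sm_zero sm_c0)
qed

fun pw :: "complex^'n^'n \<Rightarrow> nat \<Rightarrow> complex^'n^'n" where
  "pw M 0 = mat 1"
| "pw M (Suc k) = M ** pw M k"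

lemma gen_zero: "0 \<in> real_subalg_gen S"
proof -
  have "(0::real) *\<^sub>R mat 1 \<in> real_subalg_gen S" by (intro real_subalg_gen.scale real_subalg_gen.one)
  thus ?thesis by simp
qed

lemma gen_pw: "M \<in> real_subalg_gen S \<Longrightarrow> pw M k \<in> real_subalg_gen S"
  by (induction k) (simp_all add: real_subalg_gen.one real_subalg_gen.mult)

lemma gen_sum: "finite F \<Longrightarrow> (\<And>x. x \<in> F \<Longrightarrow> f x \<in> real_subalg_gen S) \<Longrightarrow>
   sum f F \<in> real_subalg_gen S"
  by (induction F rule: finite_induct) (simp_all add: real_subalg_gen.add gen_zero)

lemma hfacts:
  fixes h :: "'n::finite \<Rightarrow> nat"
  assumes hb: "bij_betw h UNIV {0..<CARD('n)}"
  shows "\<And>i. h i < CARD('n)" and "\<And>i j. h i = h j \<longleftrightarrow> i = j"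
    and "\<And>t. t < CARD('n) \<Longrightarrow> h (inv h t) = t"
proof -
  show "\<And>i. h i < CARD('n)" using hb by (auto simp: bij_betw_def)
  show "\<And>i j. h i = h j \<longleftrightarrow> i = j" using hb by (auto simp: bij_betw_def inj_on_def)
  show "\<And>t. t < CARD('n) \<Longrightarrow> h (inv h t) = t" using hb
    by (simp add: bij_betw_inv_into_right)
qed

lemma hdelta:
  fixes h :: "'n::finite \<Rightarrow> nat"
  assumes hb: "bij_betw h UNIV {0..<CARD('n)}" and t: "t < CARD('n)"
  shows "(\<Sum>l\<in>UNIV. if h l = t then f l else 0) = f (inv h t)"
proof -
  have "\<And>l. (h l = t) = (l = inv h t)" using hfacts(2,3)[OF hb] t by metis
  thus ?thesis by (simp add: sum.delta')
qed

lemma pw_entry: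
  fixes h :: "'n::finite \<Rightarrow> nat"
  assumes hb: "bij_betw h UNIV {0..<CARD('n)}"
  assumes Pe: "\<And>i j. P $ i $ j = (if h i = (h j + 1) mod CARD('n) then 1 else 0)"
  shows "pw P k $ i $ j = (if h i = (h j + k) mod CARD('n) then 1 else 0)"
proof (induction k arbitrary: i j)
  case 0
  then show ?case using hfacts(1)[OF hb, of j] by (simp add: mat_def hfacts(2)[OF hb])
next
  case (Suc k)
  have t: "(h j + k) mod CARD('n) < CARD('n)" by simp
  have "pw P (Suc k) $ i $ j = (\<Sum>l\<in>UNIV. P $ i $ l * pw P k $ l $ j)"
    by (simp add: matrix_matrix_mult_def)
  also have "\<dots> = (\<Sum>l\<in>UNIV. if h l = (h j + k) mod CARD('n) then
        (if h i = (h l + 1) mod CARD('n) then 1 else 0) else 0)"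
    by (intro sum.cong refl) (simp add: Suc.IH Pe)
  also have "\<dots> = (if h i = ((h j + k) mod CARD('n) + 1) mod CARD('n) then 1 else 0)"
    by (subst hdelta[OF hb t]) (simp add: hfacts(3)[OF hb t])
  also have "((h j + k) mod CARD('n) + 1) mod CARD('n) = (h j + Suc k) mod CARD('n)"
    by (simp add: mod_Suc_eq)
  finally show ?case .
qed


lemma E_entry:
  fixes h :: "'n::finite \<Rightarrow> nat"
  assumes hb: "bij_betw h UNIV {0..<CARD('n)}"
  assumes Pe: "\<And>i j. P $ i $ j = (if h i = (h j + 1) mod CARD('n) then 1 else 0)"
  assumes E0e: "\<And>i j. E0 $ i $ j = (if h i = 0 \<and> h j = 0 then 1 else (0::complex))"
  shows "((pw P k ** E0) ** pw P m) $ i $ j =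
     (if h i = k mod CARD('n) \<and> (h j + m) mod CARD('n) = 0 then 1 else 0)"
proof -
  have N: "0 < CARD('n)" by simp
  have 1: "(pw P k ** E0) $ i $ j = (if h i = k mod CARD('n) \<and> h j = 0 then 1 else 0)" for i j
  proof -
    have "(pw P k ** E0) $ i $ j = (\<Sum>l\<in>UNIV. pw P k $ i $ l * E0 $ l $ j)"
      by (simp add: matrix_matrix_mult_def)
    also have "\<dots> = (\<Sum>l\<in>UNIV. if h l = 0 then
        (if h i = (h l + k) mod CARD('n) \<and> h j = 0 then 1 else 0) else 0)"
      by (intro sum.cong refl) (simp add: pw_entry[OF hb Pe] E0e)
    also have "\<dots> = (if h i = k mod CARD('n) \<and> h j = 0 then 1 else 0)"
      by (subst hdelta[OF hb N]) (simp add: hfacts(3)[OF hb N])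
    finally show ?thesis .
  qed
  have "((pw P k ** E0) ** pw P m) $ i $ j = (\<Sum>l\<in>UNIV. (pw P k ** E0) $ i $ l * pw P m $ l $ j)"
    by (simp add: matrix_matrix_mult_def)
  also have "\<dots> = (\<Sum>l\<in>UNIV. if h l = 0 then
        (if h i = k mod CARD('n) \<and> 0 = (h j + m) mod CARD('n) then 1 else 0) else 0)"
    by (intro sum.cong refl) (auto simp: pw_entry[OF hb Pe] 1)
  also have "\<dots> = (if h i = k mod CARD('n) \<and> (h j + m) mod CARD('n) = 0 then 1 else 0)"
    by (subst hdelta[OF hb N]) auto
  finally show ?thesis .
qed

lemma modlem: "(x::nat) < N \<Longrightarrow> y < N \<Longrightarrow> ((x + (N - y)) mod N = 0) = (x = y)"
proof -
  assume a: "x < N" "y < N"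
  show ?thesis
  proof (cases "y \<le> x")
    case True
    have e: "x + (N - y) = (x - y) + N" using True a by simp
    have "(x + (N - y)) mod N = (x - y) mod N" by (simp only: e mod_add_self2)
    also have "(x - y) mod N = x - y" using a by simp
    finally show ?thesis using True by linarith
  next
    case False
    have "x + (N - y) < N" "0 < x + (N - y)" using False a by auto
    then show ?thesis using False a by simp
  qed
qed


theorem corollary6p4:
  shows "\<exists>X :: nat \<Rightarrow> complex^'n^'n.
           AR_relations X \<and> real_subalg_gen (X ` {1..7}) = UNIV"
proof -
  obtain h :: "'n \<Rightarrow> nat" where hb: "bij_betw h UNIV {0..<CARD('n)}"
    using ex_bij_betw_finite_nat[of "UNIV :: 'n set"] by auto
  define P :: "complex^'n^'n" where "P = (\<chi> i j. if h i = (h j + 1) mod CARD('n) then 1 else 0)"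
  define E0 :: "complex^'n^'n" where "E0 = (\<chi> i j. if h i = 0 \<and> h j = 0 then 1 else 0)"
  have Pe: "\<And>i j. P $ i $ j = (if h i = (h j + 1) mod CARD('n) then 1 else 0)"
    by (simp add: P_def)
  have E0e: "\<And>i j. E0 $ i $ j = (if h i = 0 \<and> h j = 0 then 1 else (0::complex))"
    by (simp add: E0_def)
  define X where "X \<equiv> (\<lambda>k::nat. if k = 1 then E0 else if k = 2 then P else if k = 3 then mat \<i>
     else if k = 5 then sm \<i> E0 else if k = 6 then sm (-\<i>) P else 0)"
  have AR: "AR_relations X" unfolding X_def by (rule rels)
  let ?G = "real_subalg_gen (X ` {1..7})"
  have E0G: "E0 \<in> ?G" by (rule real_subalg_gen.gen) (force simp: X_def image_iff)
  have PG: "P \<in> ?G" by (rule real_subalg_gen.gen) (force simp: X_def image_iff)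
  have iG: "mat \<i> \<in> ?G" by (rule real_subalg_gen.gen) (force simp: X_def image_iff)
  define E where "E a b = (pw P (h a) ** E0) ** pw P (CARD('n) - h b)" for a b
  have EG: "E a b \<in> ?G" for a b
    unfolding E_def by (intro real_subalg_gen.mult gen_pw E0G PG)
  have Ee: "E a b $ i $ j = (if i = a \<and> j = b then 1 else 0)" for a b i j
  proof -
    have "(h i = h a mod CARD('n)) = (i = a)" using hfacts[OF hb] by simp
    moreover have "((h j + (CARD('n) - h b)) mod CARD('n) = 0) = (j = b)"
      using modlem[OF hfacts(1)[OF hb, of j] hfacts(1)[OF hb, of b]] hfacts(2)[OF hb] by simp
    ultimately show ?thesis unfolding E_def E_entry[OF hb Pe E0e] by simp
  qed
  have "M \<in> ?G" for M
  proof -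
    define F where "F a b = Re (M $ a $ b) *\<^sub>R E a b + Im (M $ a $ b) *\<^sub>R (mat \<i> ** E a b)" for a b
    have FG: "(\<Sum>a\<in>UNIV. \<Sum>b\<in>UNIV. F a b) \<in> ?G"
      unfolding F_def
      by (intro gen_sum finite real_subalg_gen.add real_subalg_gen.scale real_subalg_gen.mult iG EG)
    have Fe: "F a b $ i $ j = (if i = a \<and> j = b then M $ a $ b else 0)" for a b i j
    proof -
      have "F a b $ i $ j = Re (M $ a $ b) *\<^sub>R E a b $ i $ j
            + Im (M $ a $ b) *\<^sub>R (\<i> * E a b $ i $ j)"
        by (simp add: F_def mat_mul_l sm_def)
      also have "\<dots> = (if i = a \<and> j = b then M $ a $ b else 0)"
        by (simp add: Ee scaleR_conv_of_real complex_eq[symmetric] mult.commute)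
      finally show ?thesis .
    qed
    have "(\<Sum>a\<in>UNIV. \<Sum>b\<in>UNIV. F a b) = M"
    proof (rule vec_eq_iff[THEN iffD2], intro allI, rule vec_eq_iff[THEN iffD2], intro allI)
      fix i j
      have "(\<Sum>a\<in>UNIV. \<Sum>b\<in>UNIV. F a b) $ i $ j = (\<Sum>a\<in>UNIV. \<Sum>b\<in>UNIV. F a b $ i $ j)"
        by simp
      also have "\<dots> = (\<Sum>a\<in>UNIV. if a = i then (\<Sum>b\<in>UNIV. if b = j then M $ a $ b else 0) else 0)"
        by (intro sum.cong refl) (auto simp: Fe)
      also have "\<dots> = M $ i $ j" by (simp add: sum.delta)
      finally show "(\<Sum>a\<in>UNIV. \<Sum>b\<in>UNIV. F a b) $ i $ j = M $ i $ j" .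
    qed
    with FG show ?thesis by simp
  qed
  with AR show ?thesis by blast
qed

end
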